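(* For real parameters $\alpha,\beta\ge0$ define $\phi^{(\alpha,\beta)}=(\phi^{(\alpha,\beta)}_1,\phi^{(\alpha,\beta)}_2):\Omega_+^2\to\Omega_+^2$ by $$\phi^{(\alpha,\beta)}(x,y)=\left(y(I+\alpha xy)^{-1}(I+\beta xy),\; x(I+\beta yx)^{-1}(I+\alpha yx)\right).$$ For $x,y,z\in\Omega_+$ set $$F_{12}^{(\alpha,\beta)}(x,y,z)=\left(\phi_1^{(\alpha,\beta)}(x,y),\phi_2^{(\alpha,\beta)}(x,y),z\right),\quad F_{13}^{(\alpha,\gamma)}(x,y,z)=\left(\phi_1^{(\alpha,\gamma)}(x,z),y,\phi_2^{(\alpha,\gamma)}(x,z)\right),$$ $$F_{23}^{(\beta,\gamma)}(x,y,z)=\left(x,\phi_1^{(\beta,\gamma)}(y,z),\phi_2^{(\beta,\gamma)}(y,z)\right).$$ Then $\phi$ is a parametric Yang–Baxter map: for all $\alpha,\beta,\gamma\ge0$, $$F_{12}^{(\alpha,\beta)}\circ F_{13}^{(\alpha,\gamma)}\circ F_{23}^{(\beta,\gamma)}=F_{23}^{(\beta,\gamma)}\circ F_{13}^{(\alpha,\gamma)}\circ F_{12}^{(\alpha,\beta)}\quad\text{on }\Omega_+^3.$$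
   Context: Fix an integer $r\ge1$. $\Omega_+$ denotes the set of real symmetric positive definite $r\times r$ matrices and $I$ the identity matrix. For $\alpha,\beta\ge0$ the matrices $I+\alpha xy$ etc. are invertible for $x,y\in\Omega_+$, and $\phi^{(\alpha,\beta)}$ maps $\Omega_+^2$ into $\Omega_+^2$. *)

theory Defs
  imports "HOL-Analysis.Analysis"
begin

definition pos_def_mat :: "real^'n^'n \<Rightarrow> bool" where
  "pos_def_mat A \<longleftrightarrow> transpose A = A \<and> (\<forall>v. v \<noteq> 0 \<longrightarrow> v \<bullet> (A *v v) > 0)"

definition phi1 :: "real \<Rightarrow> real \<Rightarrow> real^'n^'n \<Rightarrow> real^'n^'n \<Rightarrow> real^'n^'n" where
  "phi1 a b x y = y ** matrix_inv (mat 1 + a *\<^sub>R (x ** y)) ** (mat 1 + b *\<^sub>R (x ** y))"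

definition phi2 :: "real \<Rightarrow> real \<Rightarrow> real^'n^'n \<Rightarrow> real^'n^'n \<Rightarrow> real^'n^'n" where
  "phi2 a b x y = x ** matrix_inv (mat 1 + b *\<^sub>R (y ** x)) ** (mat 1 + a *\<^sub>R (y ** x))"


definition F12 :: "real \<Rightarrow> real \<Rightarrow> (real^'n^'n) \<times> (real^'n^'n) \<times> (real^'n^'n) \<Rightarrow> (real^'n^'n) \<times> (real^'n^'n) \<times> (real^'n^'n)" where
  "F12 a b = (\<lambda>(x, y, z). (phi1 a b x y, phi2 a b x y, z))"

definition F13 :: "real \<Rightarrow> real \<Rightarrow> (real^'n^'n) \<times> (real^'n^'n) \<times> (real^'n^'n) \<Rightarrow> (real^'n^'n) \<times> (real^'n^'n) \<times> (real^'n^'n)" where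
  "F13 a c = (\<lambda>(x, y, z). (phi1 a c x z, y, phi2 a c x z))"

definition F23 :: "real \<Rightarrow> real \<Rightarrow> (real^'n^'n) \<times> (real^'n^'n) \<times> (real^'n^'n) \<Rightarrow> (real^'n^'n) \<times> (real^'n^'n) \<times> (real^'n^'n)" where
  "F23 b c = (\<lambda>(x, y, z). (x, phi1 b c y z, phi2 b c y z))"

end

theory Submission
  imports Defs
begin


lemma mrd: "((A::real^'n^'m) + B) ** (C::real^'p^'n) = A ** C + B ** C"
  by (vector matrix_matrix_mult_def sum.distrib[symmetric] field_simps)

lemma msc: "(A::real^'n^'m) ** (k *\<^sub>R (B::real^'p^'n)) = k *\<^sub>R (A ** B)"
  by (simp add: matrix_scalar_ac scalar_matrix_assoc)

lemma smc: "(k *\<^sub>R (A::real^'n^'m)) ** (B::real^'p^'n) = k *\<^sub>R (A ** B)"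
  by (simp add: scalar_matrix_assoc)

lemma inv_r: "invertible (A::real^'n^'n) \<Longrightarrow> A ** matrix_inv A = mat 1"
  unfolding invertible_def matrix_inv_def by (metis (mono_tags, lifting) someI_ex)

lemma inv_l: "invertible (A::real^'n^'n) \<Longrightarrow> matrix_inv A ** A = mat 1"
  unfolding invertible_def matrix_inv_def by (metis (mono_tags, lifting) someI_ex)

lemma inv_r2: "invertible (A::real^'n^'n) \<Longrightarrow> X ** A ** matrix_inv A = X"
  by (metis inv_r matrix_mul_assoc matrix_mul_rid)

lemma inv_l2: "invertible (A::real^'n^'n) \<Longrightarrow> X ** matrix_inv A ** A = X"
  by (metis inv_l matrix_mul_assoc matrix_mul_rid)

lemma inv_unique: "(A::real^'n^'n) ** B = mat 1 \<Longrightarrow> matrix_inv A = B"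
proof -
  assume h: "A ** B = mat 1"
  then have h2: "B ** A = mat 1" using matrix_left_right_inverse by blast
  then have "invertible A" using h invertible_def by blast
  then have "matrix_inv A = matrix_inv A ** (A ** B)" by (simp add: h)
  also have "\<dots> = B" by (simp add: matrix_mul_assoc inv_l \<open>invertible A\<close>)
  finally show ?thesis .
qed

lemma invertible_inv: "invertible (A::real^'n^'n) \<Longrightarrow> invertible (matrix_inv A)"
  using inv_l inv_r invertible_def by blast

lemma inv_mult: "invertible (A::real^'n^'n) \<Longrightarrow> invertible (B::real^'n^'n) \<Longrightarrow>
   matrix_inv (A ** B) = matrix_inv B ** matrix_inv A"
proof -
  assume a: "invertible A" "invertible B"
  show ?thesis
    apply (rule inv_unique)
    by (metis a inv_r inv_r2 matrix_mul_assoc)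
qed

definition psd :: "real^'n^'n \<Rightarrow> bool" where
  "psd A \<longleftrightarrow> transpose A = A \<and> (\<forall>v. v \<bullet> (A *v v) \<ge> 0)"

lemma pd_invertible: "pos_def_mat (A::real^'n^'n) \<Longrightarrow> invertible A"
  unfolding invertible_left_inverse matrix_left_invertible_ker pos_def_mat_def
  by (metis inner_zero_right less_irrefl)

lemma transpose_add: "transpose ((A::real^'n^'m) + B) = transpose A + transpose B"
  by (vector transpose_def)

lemma inner_transpose: "v \<bullet> ((A::real^'n^'m) *v w) = (transpose A *v v) \<bullet> w"
  by (metis dot_lmul_matrix transpose_matrix_vector)

lemma transpose_inv: "invertible (A::real^'n^'n) \<Longrightarrow> transpose (matrix_inv A) = matrix_inv (transpose A)"
  by (metis inv_l inv_unique matrix_transpose_mul transpose_mat)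

lemma pd_inv: "pos_def_mat (A::real^'n^'n) \<Longrightarrow> pos_def_mat (matrix_inv A)"
proof -
  assume a: "pos_def_mat A"
  then have i: "invertible A" by (rule pd_invertible)
  have s: "transpose A = A" using a pos_def_mat_def by blast
  show ?thesis unfolding pos_def_mat_def
  proof (intro conjI allI impI)
    show "transpose (matrix_inv A) = matrix_inv A" using transpose_inv[OF i] s by simp
    fix v :: "real^'n" assume v: "v \<noteq> 0"
    define w where "w = matrix_inv A *v v"
    have vw: "v = A *v w" unfolding w_def by (simp add: matrix_vector_mul_assoc inv_r i)
    then have "w \<noteq> 0" using v by auto
    then have pos: "w \<bullet> (A *v w) > 0" using a pos_def_mat_def by blast
    have e: "v \<bullet> (matrix_inv A *v v) = w \<bullet> (A *v w)"
      by (metis inner_commute vw w_def)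
    show "v \<bullet> (matrix_inv A *v v) > 0" using e pos by simp
  qed
qed

lemma pd_add_psd: "pos_def_mat (A::real^'n^'n) \<Longrightarrow> psd B \<Longrightarrow> pos_def_mat (A + B)"
  unfolding pos_def_mat_def psd_def
  by (simp add: transpose_add matrix_vector_mult_add_rdistrib inner_add_right add_pos_nonneg)

lemma psd_scale: "psd (A::real^'n^'n) \<Longrightarrow> c \<ge> 0 \<Longrightarrow> psd (c *\<^sub>R A)"
  unfolding psd_def
  by (simp add: transpose_scalar scaleR_matrix_vector_assoc[symmetric])

lemma pd_scale: "pos_def_mat (A::real^'n^'n) \<Longrightarrow> c > 0 \<Longrightarrow> pos_def_mat (c *\<^sub>R A)"
  unfolding pos_def_mat_def
  by (simp add: transpose_scalar scaleR_matrix_vector_assoc[symmetric])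

lemma pd_psd: "pos_def_mat (A::real^'n^'n) \<Longrightarrow> psd A"
  unfolding pos_def_mat_def psd_def by (metis inner_zero_left less_eq_real_def)

lemma psd_sandwich: "transpose y = y \<Longrightarrow> pos_def_mat (D::real^'n^'n) \<Longrightarrow> psd (y ** matrix_inv D ** y)"
proof -
  assume y: "transpose y = y" and d: "pos_def_mat D"
  have di: "pos_def_mat (matrix_inv D)" using d pd_inv by blast
  then have dis: "transpose (matrix_inv D) = matrix_inv D" using pos_def_mat_def by blast
  show ?thesis unfolding psd_def
  proof (intro conjI allI)
    show "transpose (y ** matrix_inv D ** y) = y ** matrix_inv D ** y"
      by (simp add: matrix_transpose_mul y dis matrix_mul_assoc)
    fix v :: "real^'n"
    have "v \<bullet> ((y ** matrix_inv D ** y) *v v) = (y *v v) \<bullet> (matrix_inv D *v (y *v v))"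
      by (simp add: matrix_vector_mul_assoc[symmetric] inner_transpose y)
    also have "\<dots> \<ge> 0" using di pos_def_mat_def
      by (metis inner_zero_left order_less_imp_le order_refl)
    finally show "v \<bullet> ((y ** matrix_inv D ** y) *v v) \<ge> 0" .
  qed
qed

lemma pd_sym: "pos_def_mat A \<Longrightarrow> transpose A = A"
  by (simp add: pos_def_mat_def)

lemma one_plus_inv: "pos_def_mat (x::real^'n^'n) \<Longrightarrow> pos_def_mat y \<Longrightarrow> a \<ge> 0
   \<Longrightarrow> invertible (mat 1 + a *\<^sub>R (x ** y))"
proof -
  assume x: "pos_def_mat x" and y: "pos_def_mat y" and a: "a \<ge> 0"
  have d: "pos_def_mat (matrix_inv x + a *\<^sub>R y)"
    by (intro pd_add_psd pd_inv x psd_scale pd_psd y a)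
  have "mat 1 + a *\<^sub>R (x ** y) = x ** (matrix_inv x + a *\<^sub>R y)"
    by (simp add: matrix_add_ldistrib msc inv_r pd_invertible x)
  then show ?thesis using invertible_mult pd_invertible x d by metis
qed

lemma Qy: "invertible (y::real^'n^'n) \<Longrightarrow> (a *\<^sub>R x + matrix_inv y) ** y = mat 1 + a *\<^sub>R (x ** y)"
  by (simp add: mrd smc inv_l add.commute)

lemma phi1_rep: "pos_def_mat (x::real^'n^'n) \<Longrightarrow> pos_def_mat y \<Longrightarrow> a \<ge> 0 \<Longrightarrow>
  phi1 a b x y = matrix_inv (a *\<^sub>R x + matrix_inv y) ** (mat 1 + b *\<^sub>R (x ** y))"
proof -
  assume x: "pos_def_mat x" and y: "pos_def_mat y" and a: "a \<ge> 0"
  have "matrix_inv (a *\<^sub>R x + matrix_inv y) = y ** matrix_inv (mat 1 + a *\<^sub>R (x ** y))"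
    apply (rule inv_unique)
    using Qy[OF pd_invertible[OF y], of a x] inv_r[OF one_plus_inv[OF x y a]]
    by (simp add: matrix_mul_assoc)
  then show ?thesis by (simp add: phi1_def)
qed

lemma Q_pd: "pos_def_mat (x::real^'n^'n) \<Longrightarrow> pos_def_mat y \<Longrightarrow> a \<ge> 0 \<Longrightarrow>
  pos_def_mat (a *\<^sub>R x + matrix_inv y)"
  by (metis add.commute pd_add_psd pd_inv pd_psd psd_scale)

lemma phi1_pd: "pos_def_mat (x::real^'n^'n) \<Longrightarrow> pos_def_mat y \<Longrightarrow> a \<ge> 0 \<Longrightarrow> b \<ge> 0 \<Longrightarrow>
  pos_def_mat (phi1 a b x y)"
proof -
  assume x: "pos_def_mat x" and y: "pos_def_mat y" and a: "a \<ge> 0" and b: "b \<ge> 0"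
  define Q where "Q = a *\<^sub>R x + matrix_inv y"
  have Qi: "invertible Q" unfolding Q_def by (intro pd_invertible Q_pd x y a)
  have xi: "invertible x" "invertible y" using x y pd_invertible by auto
  have QY: "Q ** y = mat 1 + a *\<^sub>R (x ** y)" unfolding Q_def by (rule Qy[OF xi(2)])
  have key: "phi1 a b x y = w" if "Q ** w = mat 1 + b *\<^sub>R (x ** y)" for w
  proof -
    have "phi1 a b x y = matrix_inv Q ** (Q ** w)" using phi1_rep[OF x y a] that Q_def by simp
    also have "\<dots> = w" by (simp add: matrix_mul_assoc inv_l Qi)
    finally show ?thesis .
  qed
  show ?thesis
  proof (cases "a \<le> b")
    case True
    define D where "D = matrix_inv x + a *\<^sub>R y"
    have D: "pos_def_mat D" unfolding D_def by (intro pd_add_psd pd_inv x psd_scale pd_psd y a)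
    have xD: "x ** D = mat 1 + a *\<^sub>R (x ** y)"
      unfolding D_def by (simp add: matrix_add_ldistrib msc inv_r xi)
    have "Q ** (y ** matrix_inv D ** y) = x ** y"
      by (metis QY xD inv_r2 pd_invertible D matrix_mul_assoc)
    then have "Q ** (y + (b - a) *\<^sub>R (y ** matrix_inv D ** y)) = mat 1 + a *\<^sub>R (x ** y) + (b - a) *\<^sub>R (x ** y)"
      by (simp add: matrix_add_ldistrib msc QY)
    also have "\<dots> = mat 1 + b *\<^sub>R (x ** y)" by (simp add: algebra_simps)
    finally have "Q ** (y + (b - a) *\<^sub>R (y ** matrix_inv D ** y)) = mat 1 + b *\<^sub>R (x ** y)" .
    then have "phi1 a b x y = y + (b - a) *\<^sub>R (y ** matrix_inv D ** y)" by (rule key)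
    moreover have "pos_def_mat (y + (b - a) *\<^sub>R (y ** matrix_inv D ** y))"
      using True by (intro pd_add_psd y psd_scale psd_sandwich pd_sym y D) auto
    ultimately show ?thesis by simp
  next
    case False
    then have a0: "a > 0" using b by simp
    have ba: "(b / a) * a = b" using a0 by simp
    have "Q ** ((b / a) *\<^sub>R y + (1 - b / a) *\<^sub>R matrix_inv Q) = (b / a) *\<^sub>R (mat 1 + a *\<^sub>R (x ** y)) + (1 - b / a) *\<^sub>R mat 1"
      by (simp add: matrix_add_ldistrib msc QY inv_r Qi)
    also have "\<dots> = (b / a) *\<^sub>R mat 1 + b *\<^sub>R (x ** y) + (1 - b / a) *\<^sub>R mat 1"
      using a0 by (simp add: scaleR_add_right)
    also have "\<dots> = mat 1 + b *\<^sub>R (x ** y)" by (simp add: algebra_simps)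
    finally have "Q ** ((b / a) *\<^sub>R y + (1 - b / a) *\<^sub>R matrix_inv Q) = mat 1 + b *\<^sub>R (x ** y)" .
    then have "phi1 a b x y = (b / a) *\<^sub>R y + (1 - b / a) *\<^sub>R matrix_inv Q" by (rule key)
    moreover have "pos_def_mat ((1 - b / a) *\<^sub>R matrix_inv Q + (b / a) *\<^sub>R y)"
      using False a0 b
      using Q_pd[OF x y a] unfolding Q_def[symmetric]
      by (intro pd_add_psd pd_scale pd_inv psd_scale pd_psd y) (auto simp: field_simps)
    ultimately show ?thesis by (simp add: add.commute)
  qed
qed



lemma phi2_eq: "phi2 a b x y = phi1 b a y x"
  by (simp add: phi1_def phi2_def)

lemma F1: "pos_def_mat (x::real^'n^'n) \<Longrightarrow> pos_def_mat y \<Longrightarrow> a \<ge> 0 \<Longrightarrow> b \<ge> 0 \<Longrightarrow>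
  phi2 a b x y ** phi1 a b x y = x ** y"
proof -
  assume x: "pos_def_mat x" and y: "pos_def_mat y" and a: "a \<ge> 0" and b: "b \<ge> 0"
  have xi: "invertible x" "invertible y" using x y pd_invertible by auto
  define Q where "Q = a *\<^sub>R x + matrix_inv y"
  define R where "R = b *\<^sub>R y + matrix_inv x"
  define P where "P = mat 1 + b *\<^sub>R (x ** y)"
  have Qi: "invertible Q" unfolding Q_def by (intro pd_invertible Q_pd x y a)
  have Ri: "invertible R" unfolding R_def by (intro pd_invertible Q_pd x y b)
  have u: "phi1 a b x y = matrix_inv Q ** P" unfolding Q_def P_def by (rule phi1_rep[OF x y a])
  have v: "phi2 a b x y = matrix_inv R ** (mat 1 + a *\<^sub>R (y ** x))"
    unfolding phi2_eq R_def by (rule phi1_rep[OF y x b])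
  have e1: "mat 1 + a *\<^sub>R (y ** x) = y ** Q"
    by (simp add: Q_def matrix_add_ldistrib msc inv_r xi add.commute)
  have e2: "y ** P = R ** x ** y"
    by (simp add: P_def R_def matrix_add_ldistrib mrd msc smc inv_l xi matrix_mul_assoc add.commute)
  have "phi2 a b x y ** phi1 a b x y = matrix_inv R ** (y ** Q) ** (matrix_inv Q ** P)"
    by (simp add: u v e1)
  also have "\<dots> = matrix_inv R ** (y ** P)"
    by (simp add: matrix_mul_assoc inv_r2 Qi)
  also have "\<dots> = x ** y"
    by (simp add: e2 matrix_mul_assoc inv_l Ri)
  finally show ?thesis .
qed

lemma F2: "pos_def_mat (x::real^'n^'n) \<Longrightarrow> pos_def_mat y \<Longrightarrow> a \<ge> 0 \<Longrightarrow> b \<ge> 0 \<Longrightarrow>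
  phi1 a b x y ** phi2 a b x y = y ** x"
  using F1[of y x b a] by (simp add: phi2_eq)

lemma F3: "pos_def_mat (x::real^'n^'n) \<Longrightarrow> pos_def_mat y \<Longrightarrow> a \<ge> 0 \<Longrightarrow> b \<ge> 0 \<Longrightarrow>
  matrix_inv y + a *\<^sub>R x = matrix_inv (phi1 a b x y) + b *\<^sub>R phi2 a b x y"
proof -
  assume x: "pos_def_mat x" and y: "pos_def_mat y" and a: "a \<ge> 0" and b: "b \<ge> 0"
  have xi: "invertible x" "invertible y" using x y pd_invertible by auto
  define Q where "Q = a *\<^sub>R x + matrix_inv y"
  define P where "P = mat 1 + b *\<^sub>R (x ** y)"
  define u where "u = phi1 a b x y"
  define v where "v = phi2 a b x y"
  have Qi: "invertible Q" unfolding Q_def by (intro pd_invertible Q_pd x y a)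
  have ui: "invertible u" unfolding u_def by (intro pd_invertible phi1_pd x y a b)
  have u: "u = matrix_inv Q ** P" unfolding u_def Q_def P_def by (rule phi1_rep[OF x y a])
  have uv: "u ** v = y ** x" unfolding u_def v_def by (rule F2[OF x y a b])
  have PQ: "P ** Q = Q ** (mat 1 + b *\<^sub>R (y ** x))"
    by (simp add: P_def Q_def matrix_add_ldistrib mrd msc smc inv_l inv_r xi matrix_mul_assoc algebra_simps inv_r2)
  have uQ: "u ** Q = mat 1 + b *\<^sub>R (y ** x)"
    by (simp add: u PQ matrix_mul_assoc[symmetric] ) (simp add: matrix_mul_assoc inv_l Qi)
  have "matrix_inv u + b *\<^sub>R v = matrix_inv u ** (mat 1 + b *\<^sub>R (u ** v))"
    by (simp add: matrix_add_ldistrib msc matrix_mul_assoc inv_l ui)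
  also have "\<dots> = matrix_inv u ** (u ** Q)" by (simp add: uv uQ)
  also have "\<dots> = Q" by (simp add: matrix_mul_assoc inv_l ui)
  finally show ?thesis unfolding u_def v_def Q_def by (simp add: add.commute)
qed

lemma F4: "pos_def_mat (x::real^'n^'n) \<Longrightarrow> pos_def_mat y \<Longrightarrow> a \<ge> 0 \<Longrightarrow> b \<ge> 0 \<Longrightarrow>
  matrix_inv x + b *\<^sub>R y = matrix_inv (phi2 a b x y) + a *\<^sub>R phi1 a b x y"
  using F3[of y x b a] by (simp add: phi2_eq)



lemma phi2_pd: "pos_def_mat (x::real^'n^'n) \<Longrightarrow> pos_def_mat y \<Longrightarrow> a \<ge> 0 \<Longrightarrow> b \<ge> 0 \<Longrightarrow>
  pos_def_mat (phi2 a b x y)"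
  by (simp add: phi2_eq phi1_pd)

lemma G1: "pos_def_mat (x::real^'n^'n) \<Longrightarrow> pos_def_mat y \<Longrightarrow> pos_def_mat z \<Longrightarrow>
  a \<ge> 0 \<Longrightarrow> b \<ge> 0 \<Longrightarrow> c \<ge> 0 \<Longrightarrow>
  phi1 a c (phi1 a b x y) z =
   matrix_inv ((a*b) *\<^sub>R (x**y) + a *\<^sub>R (x ** matrix_inv z) + a *\<^sub>R mat 1 + matrix_inv y ** matrix_inv z)
   ** ((b*c) *\<^sub>R (x**y**z) + a *\<^sub>R x + c *\<^sub>R z + matrix_inv y)"
proof -
  assume x: "pos_def_mat x" and y: "pos_def_mat y" and z: "pos_def_mat z"
    and a: "a \<ge> 0" and b: "b \<ge> 0" and c: "c \<ge> 0"
  define u where "u = phi1 a b x y"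
  have u: "pos_def_mat u" unfolding u_def by (rule phi1_pd[OF x y a b])
  define Q1 where "Q1 = a *\<^sub>R x + matrix_inv y"
  define P1 where "P1 = mat 1 + b *\<^sub>R (x ** y)"
  define Q2 where "Q2 = a *\<^sub>R u + matrix_inv z"
  define P2 where "P2 = mat 1 + c *\<^sub>R (u ** z)"
  have Q1i: "invertible Q1" unfolding Q1_def by (intro pd_invertible Q_pd x y a)
  have Q2i: "invertible Q2" unfolding Q2_def by (intro pd_invertible Q_pd u z a)
  have u1: "u = matrix_inv Q1 ** P1" unfolding u_def Q1_def P1_def by (rule phi1_rep[OF x y a])
  have u2: "phi1 a c u z = matrix_inv Q2 ** P2" unfolding Q2_def P2_def by (rule phi1_rep[OF u z a])
  have Q1u: "Q1 ** u = P1" by (simp add: u1 matrix_mul_assoc inv_r Q1i)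
  have Q1uz: "Q1 ** u ** z = P1 ** z" by (simp add: Q1u)
  have "Q1 ** Q2 = a *\<^sub>R P1 + Q1 ** matrix_inv z"
    by (simp add: Q2_def matrix_add_ldistrib msc Q1u)
  also have "\<dots> = (a*b) *\<^sub>R (x**y) + a *\<^sub>R (x ** matrix_inv z) + a *\<^sub>R mat 1 + matrix_inv y ** matrix_inv z"
    by (simp add: P1_def Q1_def mrd smc algebra_simps)
  finally have QQ: "Q1 ** Q2 = (a*b) *\<^sub>R (x**y) + a *\<^sub>R (x ** matrix_inv z) + a *\<^sub>R mat 1 + matrix_inv y ** matrix_inv z" .
  have "Q1 ** P2 = Q1 + c *\<^sub>R (P1 ** z)"
    by (simp add: P2_def matrix_add_ldistrib msc matrix_mul_assoc Q1uz)
  also have "\<dots> = (b*c) *\<^sub>R (x**y**z) + a *\<^sub>R x + c *\<^sub>R z + matrix_inv y"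
    by (simp add: P1_def Q1_def mrd smc algebra_simps)
  finally have QP: "Q1 ** P2 = (b*c) *\<^sub>R (x**y**z) + a *\<^sub>R x + c *\<^sub>R z + matrix_inv y" .
  have "matrix_inv (Q1 ** Q2) ** (Q1 ** P2) = matrix_inv Q2 ** P2"
    by (simp add: inv_mult Q1i Q2i matrix_mul_assoc inv_l2)
  then show ?thesis using QQ QP u2 u_def by simp
qed



theorem theorem3:
  fixes x y z :: "real^'n^'n" and \<alpha> \<beta> \<gamma> :: real
  assumes "\<alpha> \<ge> 0" "\<beta> \<ge> 0" "\<gamma> \<ge> 0"
    and "pos_def_mat x" "pos_def_mat y" "pos_def_mat z"
  shows "(F12 \<alpha> \<beta> \<circ> F13 \<alpha> \<gamma> \<circ> F23 \<beta> \<gamma>) (x, y, z)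
       = (F23 \<beta> \<gamma> \<circ> F13 \<alpha> \<gamma> \<circ> F12 \<alpha> \<beta>) (x, y, z)"
proof -
  note p = assms
  define y1 where "y1 = phi1 \<beta> \<gamma> y z"
  define z1 where "z1 = phi2 \<beta> \<gamma> y z"
  define x2 where "x2 = phi1 \<alpha> \<gamma> x z1"
  define z2 where "z2 = phi2 \<alpha> \<gamma> x z1"
  define A where "A = phi1 \<alpha> \<beta> x2 y1"
  define B where "B = phi2 \<alpha> \<beta> x2 y1"
  define x1' where "x1' = phi1 \<alpha> \<beta> x y"
  define y1' where "y1' = phi2 \<alpha> \<beta> x y"
  define x2' where "x2' = phi1 \<alpha> \<gamma> x1' z"
  define z1' where "z1' = phi2 \<alpha> \<gamma> x1' z"
  define B' where "B' = phi1 \<beta> \<gamma> y1' z1'"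
  define C' where "C' = phi2 \<beta> \<gamma> y1' z1'"
  have y1p: "pos_def_mat y1" unfolding y1_def using p by (intro phi1_pd) auto
  have z1p: "pos_def_mat z1" unfolding z1_def using p by (intro phi2_pd) auto
  have x2p: "pos_def_mat x2" unfolding x2_def using p z1p by (intro phi1_pd) auto
  have z2p: "pos_def_mat z2" unfolding z2_def using p z1p by (intro phi2_pd) auto
  have Ap: "pos_def_mat A" unfolding A_def using p x2p y1p by (intro phi1_pd) auto
  have x1p: "pos_def_mat x1'" unfolding x1'_def using p by (intro phi1_pd) auto
  have y1p': "pos_def_mat y1'" unfolding y1'_def using p by (intro phi2_pd) auto
  have z1p': "pos_def_mat z1'" unfolding z1'_def using p x1p by (intro phi2_pd) auto
  have x2p': "pos_def_mat x2'" unfolding x2'_def using p x1p by (intro phi1_pd) auto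
  have C'p: "pos_def_mat C'" unfolding C'_def using p y1p' z1p' by (intro phi2_pd) auto
  have inv: "invertible x" "invertible y" "invertible z" "invertible y1" "invertible z1"
    "invertible x1'" "invertible y1'"
    using p y1p z1p x1p y1p' pd_invertible by auto

  have s1: "A = x2'"
  proof -
    have LA: "A = matrix_inv ((\<alpha>*\<gamma>) *\<^sub>R (x**z1) + \<alpha> *\<^sub>R (x ** matrix_inv y1) + \<alpha> *\<^sub>R mat 1 + matrix_inv z1 ** matrix_inv y1)
      ** ((\<gamma>*\<beta>) *\<^sub>R (x**z1**y1) + \<alpha> *\<^sub>R x + \<beta> *\<^sub>R y1 + matrix_inv z1)"
      unfolding A_def x2_def using p z1p y1p by (intro G1) auto
    have RA: "x2' = matrix_inv ((\<alpha>*\<beta>) *\<^sub>R (x**y) + \<alpha> *\<^sub>R (x ** matrix_inv z) + \<alpha> *\<^sub>R mat 1 + matrix_inv y ** matrix_inv z)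
      ** ((\<beta>*\<gamma>) *\<^sub>R (x**y**z) + \<alpha> *\<^sub>R x + \<gamma> *\<^sub>R z + matrix_inv y)"
      unfolding x2'_def x1'_def using p by (intro G1) auto
    have f3: "matrix_inv z + \<beta> *\<^sub>R y = matrix_inv y1 + \<gamma> *\<^sub>R z1"
      unfolding y1_def z1_def using p by (intro F3) auto
    have f4: "matrix_inv y + \<gamma> *\<^sub>R z = matrix_inv z1 + \<beta> *\<^sub>R y1"
      unfolding y1_def z1_def using p by (intro F4) auto
    have f1: "z1 ** y1 = y ** z" unfolding y1_def z1_def using p by (intro F1) auto
    have f2: "y1 ** z1 = z ** y" unfolding y1_def z1_def using p by (intro F2) auto
    have e2: "matrix_inv z1 ** matrix_inv y1 = matrix_inv y ** matrix_inv z"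
      by (metis f2 inv_mult inv)
    have "(\<alpha>*\<gamma>) *\<^sub>R (x**z1) + \<alpha> *\<^sub>R (x ** matrix_inv y1) + \<alpha> *\<^sub>R mat 1 + matrix_inv z1 ** matrix_inv y1
        = \<alpha> *\<^sub>R (x ** (matrix_inv y1 + \<gamma> *\<^sub>R z1)) + \<alpha> *\<^sub>R mat 1 + matrix_inv z1 ** matrix_inv y1"
      by (simp add: matrix_add_ldistrib msc algebra_simps)
    also have "\<dots> = \<alpha> *\<^sub>R (x ** (matrix_inv z + \<beta> *\<^sub>R y)) + \<alpha> *\<^sub>R mat 1 + matrix_inv y ** matrix_inv z"
      by (simp add: f3 e2)
    also have "\<dots> = (\<alpha>*\<beta>) *\<^sub>R (x**y) + \<alpha> *\<^sub>R (x ** matrix_inv z) + \<alpha> *\<^sub>R mat 1 + matrix_inv y ** matrix_inv z"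
      by (simp add: matrix_add_ldistrib msc algebra_simps)
    finally have eQ: "(\<alpha>*\<gamma>) *\<^sub>R (x**z1) + \<alpha> *\<^sub>R (x ** matrix_inv y1) + \<alpha> *\<^sub>R mat 1 + matrix_inv z1 ** matrix_inv y1
        = (\<alpha>*\<beta>) *\<^sub>R (x**y) + \<alpha> *\<^sub>R (x ** matrix_inv z) + \<alpha> *\<^sub>R mat 1 + matrix_inv y ** matrix_inv z" .
    have "(\<gamma>*\<beta>) *\<^sub>R (x**z1**y1) + \<alpha> *\<^sub>R x + \<beta> *\<^sub>R y1 + matrix_inv z1
        = (\<gamma>*\<beta>) *\<^sub>R (x**(z1**y1)) + \<alpha> *\<^sub>R x + (matrix_inv z1 + \<beta> *\<^sub>R y1)"
      by (simp add: matrix_mul_assoc algebra_simps)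
    also have "\<dots> = (\<beta>*\<gamma>) *\<^sub>R (x**y**z) + \<alpha> *\<^sub>R x + \<gamma> *\<^sub>R z + matrix_inv y"
      by (simp add: f1 f4[symmetric] matrix_mul_assoc algebra_simps)
    finally have eP: "(\<gamma>*\<beta>) *\<^sub>R (x**z1**y1) + \<alpha> *\<^sub>R x + \<beta> *\<^sub>R y1 + matrix_inv z1
        = (\<beta>*\<gamma>) *\<^sub>R (x**y**z) + \<alpha> *\<^sub>R x + \<gamma> *\<^sub>R z + matrix_inv y" .
    show ?thesis using LA RA eQ eP by simp
  qed

  have s3: "z2 = C'"
  proof -
    have LC: "z2 = matrix_inv ((\<gamma>*\<beta>) *\<^sub>R (z**y) + \<gamma> *\<^sub>R (z ** matrix_inv x) + \<gamma> *\<^sub>R mat 1 + matrix_inv y ** matrix_inv x)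
      ** ((\<beta>*\<alpha>) *\<^sub>R (z**y**x) + \<gamma> *\<^sub>R z + \<alpha> *\<^sub>R x + matrix_inv y)"
      unfolding z2_def z1_def phi2_eq using p by (intro G1) auto
    have RC: "C' = matrix_inv ((\<gamma>*\<alpha>) *\<^sub>R (z**x1') + \<gamma> *\<^sub>R (z ** matrix_inv y1') + \<gamma> *\<^sub>R mat 1 + matrix_inv x1' ** matrix_inv y1')
      ** ((\<alpha>*\<beta>) *\<^sub>R (z**x1'**y1') + \<gamma> *\<^sub>R z + \<beta> *\<^sub>R y1' + matrix_inv x1')"
      unfolding C'_def z1'_def phi2_eq using p x1p y1p' by (intro G1) auto
    have f4: "matrix_inv x + \<beta> *\<^sub>R y = matrix_inv y1' + \<alpha> *\<^sub>R x1'"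
      unfolding x1'_def y1'_def using p by (intro F4) auto
    have f3: "matrix_inv y + \<alpha> *\<^sub>R x = matrix_inv x1' + \<beta> *\<^sub>R y1'"
      unfolding x1'_def y1'_def using p by (intro F3) auto
    have f2: "x1' ** y1' = y ** x" unfolding x1'_def y1'_def using p by (intro F2) auto
    have f1: "y1' ** x1' = x ** y" unfolding x1'_def y1'_def using p by (intro F1) auto
    have e2: "matrix_inv x1' ** matrix_inv y1' = matrix_inv y ** matrix_inv x"
      by (metis f1 inv_mult inv)
    have "(\<gamma>*\<alpha>) *\<^sub>R (z**x1') + \<gamma> *\<^sub>R (z ** matrix_inv y1') + \<gamma> *\<^sub>R mat 1 + matrix_inv x1' ** matrix_inv y1'
        = \<gamma> *\<^sub>R (z ** (matrix_inv y1' + \<alpha> *\<^sub>R x1')) + \<gamma> *\<^sub>R mat 1 + matrix_inv x1' ** matrix_inv y1'"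
      by (simp add: matrix_add_ldistrib msc algebra_simps)
    also have "\<dots> = \<gamma> *\<^sub>R (z ** (matrix_inv x + \<beta> *\<^sub>R y)) + \<gamma> *\<^sub>R mat 1 + matrix_inv y ** matrix_inv x"
      by (simp add: f4 e2)
    also have "\<dots> = (\<gamma>*\<beta>) *\<^sub>R (z**y) + \<gamma> *\<^sub>R (z ** matrix_inv x) + \<gamma> *\<^sub>R mat 1 + matrix_inv y ** matrix_inv x"
      by (simp add: matrix_add_ldistrib msc algebra_simps)
    finally have eQ: "(\<gamma>*\<alpha>) *\<^sub>R (z**x1') + \<gamma> *\<^sub>R (z ** matrix_inv y1') + \<gamma> *\<^sub>R mat 1 + matrix_inv x1' ** matrix_inv y1'
        = (\<gamma>*\<beta>) *\<^sub>R (z**y) + \<gamma> *\<^sub>R (z ** matrix_inv x) + \<gamma> *\<^sub>R mat 1 + matrix_inv y ** matrix_inv x" .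
    have "(\<alpha>*\<beta>) *\<^sub>R (z**x1'**y1') + \<gamma> *\<^sub>R z + \<beta> *\<^sub>R y1' + matrix_inv x1'
        = (\<alpha>*\<beta>) *\<^sub>R (z**(x1'**y1')) + \<gamma> *\<^sub>R z + (matrix_inv x1' + \<beta> *\<^sub>R y1')"
      by (simp add: matrix_mul_assoc algebra_simps)
    also have "\<dots> = (\<beta>*\<alpha>) *\<^sub>R (z**y**x) + \<gamma> *\<^sub>R z + \<alpha> *\<^sub>R x + matrix_inv y"
      by (simp add: f2 f3[symmetric] matrix_mul_assoc algebra_simps)
    finally have eP: "(\<alpha>*\<beta>) *\<^sub>R (z**x1'**y1') + \<gamma> *\<^sub>R z + \<beta> *\<^sub>R y1' + matrix_inv x1'
        = (\<beta>*\<alpha>) *\<^sub>R (z**y**x) + \<gamma> *\<^sub>R z + \<alpha> *\<^sub>R x + matrix_inv y" .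
    show ?thesis using LC RC eQ eP by simp
  qed

  have s2: "B = B'"
  proof -
    have a1: "B ** A = x2 ** y1" unfolding A_def B_def using p x2p y1p by (intro F1) auto
    have a2: "z2 ** x2 = x ** z1" unfolding x2_def z2_def using p z1p by (intro F1) auto
    have a3: "z1 ** y1 = y ** z" unfolding y1_def z1_def using p by (intro F1) auto
    have b1: "C' ** B' = y1' ** z1'" unfolding B'_def C'_def using p y1p' z1p' by (intro F1) auto
    have b2: "z1' ** x2' = x1' ** z" unfolding x2'_def z1'_def using p x1p by (intro F1) auto
    have b3: "y1' ** x1' = x ** y" unfolding x1'_def y1'_def using p by (intro F1) auto
    have "z2 ** B ** A = x ** y ** z"
      by (metis a1 a2 a3 matrix_mul_assoc)
    moreover have "C' ** B' ** x2' = x ** y ** z"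
      by (metis b1 b2 b3 matrix_mul_assoc)
    ultimately have e: "C' ** B ** A = C' ** B' ** A" using s1 s3 by simp
    have iC: "invertible C'" using C'p pd_invertible by blast
    have iA: "invertible A" using Ap pd_invertible by blast
    have "B = matrix_inv C' ** (C' ** B ** A) ** matrix_inv A"
      by (simp add: matrix_mul_assoc inv_l iC inv_r2 iA)
    also have "\<dots> = matrix_inv C' ** (C' ** B' ** A) ** matrix_inv A" by (simp add: e)
    also have "\<dots> = B'"
      by (simp add: matrix_mul_assoc inv_l iC inv_r2 iA)
    finally show ?thesis .
  qed

  show ?thesis
    using s1 s2 s3
    by (simp add: F12_def F13_def F23_def A_def B_def x2_def z2_def y1_def z1_def
        x2'_def B'_def C'_def z1'_def x1'_def y1'_def Let_def)
qed


end
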